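(* Every finite ordinal potential game has at least one strongly maximal equilibrium.
   Context: A finite strategic-form game $\Gamma=(I,(S_i)_{i\in I},(u_i)_{i\in I})$ has finite player set $I$, finite nonempty strategy sets $S_i$, utilities $u_i:S\to\mathbb{R}$, $S=\prod_i S_i$; $(s_i',s_{-i})$ denotes $s$ with player $i$'s strategy replaced by $s_i'$. A pure Nash equilibrium is $s\in S$ with $u_i(s)\ge u_i(s_i',s_{-i})$ for all $i$ and $s_i'\in S_i$. A function $P:S\to\mathbb{R}$ is an ordinal potential if for all $i$, $a,b\in S_i$, $\sigma_{-i}\in S_{-i}$: $u_i(a,\sigma_{-i})>u_i(b,\sigma_{-i})\iff P(a,\sigma_{-i})>P(b,\sigma_{-i})$; $\Gamma$ is an ordinal potential game if one exists. The ordinal deployment graph of $\Gamma$ has vertex set $S$ and an arc $(s,s')$, $s'\neq s$, iff $s'=(s_i',s_{-i})$ for some $i$ with $u_i(s')\ge u_i(s)$. Define $s\succeq s'$ iff there is a directed path (possibly of length $0$) in this graph from $s'$ to $s$, and $s\succ s'$ iff $s\succeq s'$ and not $s'\succeq s$. A strongly maximal state is an $s^*$ with no $s$ satisfying $s\succ s^*$. Two states communicate if each is reachable from the other by a directed path. A strongly maximal equilibrium is a strongly maximal state $s$ such that every state communicating with $s$ (including $s$) is a pure Nash equilibrium. *)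

theory Defs
  imports Complex_Main "HOL-Library.FuncSet"
begin

definition profiles :: "'i set \<Rightarrow> ('i \<Rightarrow> 's set) \<Rightarrow> ('i \<Rightarrow> 's) set" where
  "profiles I S = PiE I S"

definition finite_game :: "'i set \<Rightarrow> ('i \<Rightarrow> 's set) \<Rightarrow> bool" where
  "finite_game I S \<longleftrightarrow> finite I \<and> (\<forall>i\<in>I. finite (S i) \<and> S i \<noteq> {})"

definition is_ordinal_potential ::
  "'i set \<Rightarrow> ('i \<Rightarrow> 's set) \<Rightarrow> ('i \<Rightarrow> ('i \<Rightarrow> 's) \<Rightarrow> real) \<Rightarrow> (('i \<Rightarrow> 's) \<Rightarrow> real) \<Rightarrow> bool" where
  "is_ordinal_potential I S u P \<longleftrightarrow>
     (\<forall>i\<in>I. \<forall>a\<in>S i. \<forall>b\<in>S i. \<forall>\<sigma>\<in>profiles I S.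
        u i (\<sigma>(i := a)) > u i (\<sigma>(i := b)) \<longleftrightarrow> P (\<sigma>(i := a)) > P (\<sigma>(i := b)))"

definition ordinal_potential_game ::
  "'i set \<Rightarrow> ('i \<Rightarrow> 's set) \<Rightarrow> ('i \<Rightarrow> ('i \<Rightarrow> 's) \<Rightarrow> real) \<Rightarrow> bool" where
  "ordinal_potential_game I S u \<longleftrightarrow> (\<exists>P. is_ordinal_potential I S u P)"

definition odg_arc ::
  "'i set \<Rightarrow> ('i \<Rightarrow> 's set) \<Rightarrow> ('i \<Rightarrow> ('i \<Rightarrow> 's) \<Rightarrow> real) \<Rightarrow> ('i \<Rightarrow> 's) \<Rightarrow> ('i \<Rightarrow> 's) \<Rightarrow> bool" where
  "odg_arc I S u s s' \<longleftrightarrow> s \<in> profiles I S \<and> s' \<noteq> s \<and>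
     (\<exists>i\<in>I. \<exists>a\<in>S i. s' = s(i := a) \<and> u i s' \<ge> u i s)"

definition reach ::
  "'i set \<Rightarrow> ('i \<Rightarrow> 's set) \<Rightarrow> ('i \<Rightarrow> ('i \<Rightarrow> 's) \<Rightarrow> real) \<Rightarrow> ('i \<Rightarrow> 's) \<Rightarrow> ('i \<Rightarrow> 's) \<Rightarrow> bool" where
  "reach I S u = (odg_arc I S u)\<^sup>*\<^sup>*"

definition weakly_dominates where
  "weakly_dominates I S u s s' \<longleftrightarrow> reach I S u s' s"

definition strictly_dominates where
  "strictly_dominates I S u s s' \<longleftrightarrow> weakly_dominates I S u s s' \<and> \<not> weakly_dominates I S u s' s"

definition strongly_maximal where
  "strongly_maximal I S u s\<^sub>0 \<longleftrightarrow> s\<^sub>0 \<in> profiles I S \<and>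
     \<not> (\<exists>s\<in>profiles I S. strictly_dominates I S u s s\<^sub>0)"

definition communicate where
  "communicate I S u s t \<longleftrightarrow> reach I S u s t \<and> reach I S u t s"

definition pure_nash ::
  "'i set \<Rightarrow> ('i \<Rightarrow> 's set) \<Rightarrow> ('i \<Rightarrow> ('i \<Rightarrow> 's) \<Rightarrow> real) \<Rightarrow> ('i \<Rightarrow> 's) \<Rightarrow> bool" where
  "pure_nash I S u s \<longleftrightarrow> s \<in> profiles I S \<and> (\<forall>i\<in>I. \<forall>a\<in>S i. u i s \<ge> u i (s(i := a)))"

definition strongly_maximal_equilibrium where
  "strongly_maximal_equilibrium I S u s \<longleftrightarrow> strongly_maximal I S u s \<and>
     (\<forall>t\<in>profiles I S. communicate I S u s t \<longrightarrow> pure_nash I S u t)"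

end

theory Submission
  imports Defs
begin

lemma arc_facts:
  assumes pot: "is_ordinal_potential I S u P" and arc: "odg_arc I S u s s'"
  shows "s' \<in> profiles I S \<and> P s \<le> P s'"
proof -
  from arc obtain i a where s: "s \<in> profiles I S" and i: "i \<in> I" and a: "a \<in> S i"
    and s': "s' = s(i := a)" and ge: "u i s' \<ge> u i s"
    unfolding odg_arc_def by blast
  have si: "s i \<in> S i" using s i unfolding profiles_def by (auto simp: PiE_iff)
  have "s' \<in> profiles I S" using s i a s' unfolding profiles_def by (auto simp: PiE_iff extensional_def)
  moreover have "u i (s(i := s i)) > u i (s(i := a)) \<longleftrightarrow> P (s(i := s i)) > P (s(i := a))"
    using pot i a si s unfolding is_ordinal_potential_def by blast
  ultimately show ?thesis using ge s' by auto
qed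

lemma reach_facts:
  assumes pot: "is_ordinal_potential I S u P" and r: "reach I S u s t" and s: "s \<in> profiles I S"
  shows "t \<in> profiles I S \<and> P s \<le> P t"
  using r[unfolded reach_def] s
proof (induction rule: rtranclp_induct)
  case base then show ?case by simp
next
  case (step y z)
  then show ?case using arc_facts[OF pot step(2)] by auto
qed

theorem corollary1:
  fixes I :: "'i set" and S :: "'i \<Rightarrow> 's set" and u :: "'i \<Rightarrow> ('i \<Rightarrow> 's) \<Rightarrow> real"
  assumes "finite_game I S"
    and "ordinal_potential_game I S u"
  shows "\<exists>s. strongly_maximal_equilibrium I S u s"
proof -
  obtain P where pot: "is_ordinal_potential I S u P"
    using assms(2) unfolding ordinal_potential_game_def by blast
  let ?Pr = "profiles I S"
  define R where "R s = {t. reach I S u s t}" for s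
  have fin: "finite ?Pr" using assms(1) unfolding finite_game_def profiles_def
    by (auto intro: finite_PiE)
  have ne: "?Pr \<noteq> {}" using assms(1) unfolding finite_game_def profiles_def
    by (auto simp: PiE_eq_empty_iff)
  have Rsub: "R s \<subseteq> ?Pr" if "s \<in> ?Pr" for s
    using reach_facts[OF pot _ that] unfolding R_def by auto
  obtain s0 where s0: "s0 \<in> ?Pr" and mn: "\<forall>s\<in>?Pr. card (R s0) \<le> card (R s)"
  proof -
    obtain m where "m \<in> ?Pr" "\<forall>s\<in>?Pr. card (R m) \<le> card (R s)"
      using ex_has_least_nat[of "\<lambda>s. s \<in> ?Pr" _ "\<lambda>s. card (R s)"] ne by blast
    thus ?thesis using that by blast
  qed
  have backr: "reach I S u t s0" if "reach I S u s0 t" for t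
  proof -
    have tP: "t \<in> ?Pr" using reach_facts[OF pot that s0] by simp
    have sub: "R t \<subseteq> R s0" unfolding R_def using that
      by (auto simp: reach_def)
    have "finite (R s0)" using Rsub[OF s0] fin finite_subset by blast
    moreover have "card (R s0) \<le> card (R t)" using mn tP by blast
    ultimately have "R t = R s0" using sub card_seteq by blast
    moreover have "s0 \<in> R s0" unfolding R_def reach_def by simp
    ultimately show ?thesis unfolding R_def by auto
  qed
  have "strongly_maximal I S u s0"
    unfolding strongly_maximal_def strictly_dominates_def weakly_dominates_def
    using s0 backr by blast
  moreover have "pure_nash I S u t" if tP: "t \<in> ?Pr" and c: "communicate I S u s0 t" for t
  proof -
    have r: "reach I S u s0 t" using c unfolding communicate_def by simp
    have "u i t \<ge> u i (t(i := a))" if i: "i \<in> I" and a: "a \<in> S i" for i a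
    proof (rule ccontr)
      assume "\<not> ?thesis"
      hence gt: "u i (t(i := a)) > u i t" by simp
      have ti: "t i \<in> S i" using tP i unfolding profiles_def by (auto simp: PiE_iff)
      have "u i (t(i := a)) > u i (t(i := t i)) \<longleftrightarrow> P (t(i := a)) > P (t(i := t i))"
        using pot i a ti tP unfolding is_ordinal_potential_def by blast
      hence Pgt: "P (t(i := a)) > P t" using gt by simp
      have neq: "t(i := a) \<noteq> t" using gt by auto
      have "odg_arc I S u t (t(i := a))" unfolding odg_arc_def using tP i a neq gt by auto
      hence "reach I S u t (t(i := a))" unfolding reach_def by auto
      hence "reach I S u s0 (t(i := a))" using r unfolding reach_def by auto
      hence "reach I S u (t(i := a)) s0" using backr by blast
      hence "reach I S u (t(i := a)) t" using r unfolding reach_def by auto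
      hence "P (t(i := a)) \<le> P t"
        using reach_facts[OF pot _ arc_facts[OF pot \<open>odg_arc I S u t (t(i := a))\<close>, THEN conjunct1]]
        by blast
      thus False using Pgt by simp
    qed
    thus ?thesis unfolding pure_nash_def using tP by blast
  qed
  ultimately show ?thesis unfolding strongly_maximal_equilibrium_def by blast
qed

end
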